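(* For every real $\alpha$ with $0<\alpha<1/2$ there exists a positive constant $c_\alpha$ such that for every real $M\ge 2$, \[ \prod_{p\le M}\Bigl(p^{2\alpha-2}\Bigl(1-\frac1p\Bigr)^{2\alpha}+\frac2p\Bigl(1-\frac1p\Bigr)+\Bigl(1-\frac1p\Bigr)^{2-2\alpha}\Bigr)\ge c_\alpha(\log M)^{2\alpha}, \] where the product runs over primes $p\le M$. *)

theory Defs
  imports Complex_Main "HOL-Computational_Algebra.Primes"
begin

end

theory Submission
  imports Defs "HOL-Analysis.Harmonic_Numbers" "HOL-Library.FuncSet"
begin


lemma factor_bound:
  fixes \<alpha> p :: real
  assumes a: "0 < \<alpha>" "\<alpha> < 1/2" and p: "p \<ge> 2"
  shows "p powr (2*\<alpha> - 2) * (1 - 1 / p) powr (2*\<alpha>)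
        + 2 / p * (1 - 1 / p)
        + (1 - 1 / p) powr (2 - 2*\<alpha>)
       \<ge> (p / (p - 1)) powr (2*\<alpha>) * (1 - 1/p^2)^3"
proof -
  define q where "q = 1 - 1/p"
  have q0: "q > 0" and q1: "q \<le> 1" using p by (auto simp: q_def field_simps)
  have pq: "p / (p - 1) = inverse q" using p by (simp add: q_def field_simps)
  have e1: "(p / (p - 1)) powr (2*\<alpha>) = q powr (-(2*\<alpha>))"
    unfolding pq inverse_powr powr_minus by (rule refl)
  have e2: "q powr (2 - 2*\<alpha>) = q powr (-(2*\<alpha>)) * q^2"
  proof -
    have "q powr (2 - 2*\<alpha>) = q powr (-(2*\<alpha>) + 2)" by (rule arg_cong[where f="\<lambda>t. q powr t"]) simp
    also have "\<dots> = q powr (-(2*\<alpha>)) * q powr 2" by (rule powr_add)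
    also have "q powr 2 = q^2" using q0 by simp
    finally show ?thesis .
  qed
  have le: "q powr (2 - 2*\<alpha>) \<le> q"
    using powr_mono'[of 1 "2 - 2*\<alpha>" q] q0 q1 a by simp
  have t1: "p powr (2*\<alpha> - 2) * q powr (2*\<alpha>) \<ge> 0" by simp
  have t2: "2 / p * q \<ge> 2 / p * q powr (2 - 2*\<alpha>)"
    using le p by (intro mult_left_mono) auto
  have poly: "q^2 * (1 + 2/p) \<ge> (1 - 1/p^2)^3"
  proof -
    define x where "x = 1/p"
    have x: "0 < x" "x \<le> 1/2" using p by (auto simp: x_def field_simps)
    have "(1 - x^2)^3 = (1-x)^2 * ((1 - x^2) * (1+x)^2)" by (simp add: power2_eq_square power3_eq_cube algebra_simps)
    also have "(1 - x^2) * (1+x)^2 \<le> 1 + 2*x"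
    proof -
      have "(1 - x^2) * (1+x)^2 = 1 + 2*x - 2*x^3 - x^4" by (simp add: power2_eq_square power3_eq_cube power4_eq_xxxx algebra_simps)
      moreover have "x^4 \<ge> 0" "x^3 \<ge> 0" using x by auto
      ultimately show ?thesis using x by linarith
    qed
    hence "(1-x)^2 * ((1 - x^2) * (1+x)^2) \<le> (1-x)^2 * (1 + 2*x)" by (intro mult_left_mono) auto
    finally show ?thesis by (simp add: q_def x_def power2_eq_square)
  qed
  have "p powr (2*\<alpha> - 2) * q powr (2*\<alpha>) + 2 / p * q + q powr (2 - 2*\<alpha>)
      \<ge> q powr (2 - 2*\<alpha>) * (1 + 2/p)"
  proof -
    have "q powr (2 - 2*\<alpha>) * (1 + 2/p) = q powr (2 - 2*\<alpha>) + 2 / p * q powr (2 - 2*\<alpha>)"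
      by (simp add: algebra_simps)
    then show ?thesis using t1 t2 by linarith
  qed
  also have "q powr (2 - 2*\<alpha>) * (1 + 2/p) = q powr (-(2*\<alpha>)) * (q^2 * (1 + 2/p))"
    by (simp add: e2)
  finally have "p powr (2*\<alpha> - 2) * q powr (2*\<alpha>) + 2 / p * q + q powr (2 - 2*\<alpha>)
      \<ge> q powr (-(2*\<alpha>)) * (1 - 1/p^2)^3"
    using poly order.trans mult_left_mono[OF poly, of "q powr (-(2*\<alpha>))"] by simp
  thus ?thesis by (simp add: e1 q_def)
qed



lemma tele0: "(\<Prod>n\<in>{2..Suc m}. (1 - 1 / (real n)^2)) = (real m + 2) / (2 * real m + 2)"
proof (induction m)
  case 0 then show ?case by simp
next
  case (Suc n)
  have "{2..Suc (Suc n)} = insert (Suc (Suc n)) {2..Suc n}" by auto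
  then have "(\<Prod>k\<in>{2..Suc (Suc n)}. (1 - 1 / (real k)^2)) = (1 - 1/(real n + 2)^2) * ((real n + 2) / (2 * real n + 2))"
    using Suc by (simp add: add.commute)
  also have "\<dots> = (real n + 3) / (2 * real n + 4)"
  proof -
    have a: "1 - 1/(real n + 2)^2 = ((real n + 1) * (real n + 3)) / (real n + 2)^2"
    proof -
      have d: "(real n + 2)^2 \<noteq> 0" by simp
      have "1 - 1/(real n + 2)^2 = ((real n + 2)^2 - 1)/(real n + 2)^2" using d by (simp add: diff_divide_distrib)
      also have "(real n + 2)^2 - 1 = (real n + 1) * (real n + 3)" by (simp add: power2_eq_square algebra_simps)
      finally show ?thesis .
    qed
    have b: "2 * real n + 2 = 2 * (real n + 1)" "2 * real n + 4 = 2 * (real n + 2)" by simp_all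
    have "(1 - 1/(real n + 2)^2) * ((real n + 2) / (2 * real n + 2)) = (real n + 1) * (real n + 3) / ((real n + 2) * (2 * real n + 2))"
      unfolding a by (simp add: power2_eq_square)
    also have "\<dots> = (real n + 3) / (2 * real n + 4)"
    proof -
      have nz: "(real n + 2) * (2 * real n + 2) > 0" by (intro mult_pos_pos) auto
      show ?thesis using nz by (subst frac_eq_eq) (auto simp: algebra_simps)
    qed
    finally show ?thesis .
  qed
  finally show ?case by (simp add: add.commute)
qed

lemma tele: "N \<ge> 1 \<Longrightarrow> (\<Prod>n\<in>{2..N}. (1 - 1 / (real n)^2)) \<ge> 1/2"
proof -
  assume "N \<ge> 1"
  then obtain m where "N = Suc m" by (cases N) auto
  moreover have "(real m + 2) / (2 * real m + 2) \<ge> 1/2" by (simp add: field_simps)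
  ultimately show ?thesis using tele0[of m] by simp
qed

lemma tele_sub:
  assumes "P \<subseteq> {2..N}"
  shows "(\<Prod>p\<in>P. (1 - 1 / (real p)^2)) \<ge> 1/2"
proof (cases "N \<ge> 1")
  case False
  then have "P = {}" using assms by auto
  then show ?thesis by simp
next
  case True
  have fin: "finite P" using assms finite_subset by blast
  have nn: "\<And>n. n \<in> {2..N} \<Longrightarrow> 0 \<le> 1 - 1 / (real n)^2 \<and> 1 - 1 / (real n)^2 \<le> 1"
    by (auto simp: field_simps)
  have "(\<Prod>n\<in>{2..N}. (1 - 1 / (real n)^2)) = (\<Prod>p\<in>P. (1 - 1 / (real p)^2)) * (\<Prod>p\<in>{2..N}-P. (1 - 1 / (real p)^2))"
    using assms by (metis (no_types, lifting) finite_atLeastAtMost prod.subset_diff mult.commute)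
  also have "\<dots> \<le> (\<Prod>p\<in>P. (1 - 1 / (real p)^2))"
    using nn assms by (intro mult_right_le_one_le prod_nonneg prod_le_1) auto
  finally show ?thesis using tele[OF True] by linarith
qed



lemma euler_prod:
  fixes N :: nat
  shows "ln (real N + 1) \<le> (\<Prod>p\<in>{p. prime p \<and> p \<le> N}. real p / (real p - 1))"
proof -
  define P where "P = {p::nat. prime p \<and> p \<le> N}"
  have finP: "finite P" unfolding P_def by (rule finite_subset[of _ "{..N}"]) auto
  have P2: "\<And>p. p \<in> P \<Longrightarrow> p \<ge> 2" unfolding P_def using prime_ge_2_nat by blast
  have geo: "\<And>p. p \<in> P \<Longrightarrow> (\<Sum>k\<in>{..N}. (1/real p)^k) \<le> real p / (real p - 1)"
  proof -
    fix p assume "p \<in> P"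
    then have p: "real p \<ge> 2" using P2 by force
    have n: "norm (1 / real p) < 1" using p by simp
    have "(\<Sum>k\<in>{..N}. (1/real p)^k) \<le> suminf (\<lambda>k. (1/real p)^k)"
      by (rule sum_le_suminf) (use n summable_geometric in auto)
    also have "\<dots> = 1 / (1 - 1/real p)" using suminf_geometric[OF n] .
    also have "\<dots> = real p / (real p - 1)" using p by (simp add: field_simps)
    finally show "(\<Sum>k\<in>{..N}. (1/real p)^k) \<le> real p / (real p - 1)" .
  qed
  define g where "g n = restrict (\<lambda>p. multiplicity p n) P" for n :: nat
  have notP0: "multiplicity p n = 0" if "n \<in> {1..N}" "p \<notin> P" "prime p" for p n
  proof -
    have "p > N" using that unfolding P_def by auto
    then have "\<not> p dvd n" using that by (auto dest: dvd_imp_le)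
    then show ?thesis by (rule not_dvd_imp_multiplicity_0)
  qed
  have inj: "inj_on g {1..N}"
  proof (rule inj_onI)
    fix n m assume nm: "n \<in> {1..N}" "m \<in> {1..N}" "g n = g m"
    show "n = m"
    proof (rule multiplicity_eq_nat)
      show "n > 0" "m > 0" using nm by auto
      fix p :: nat assume pp: "prime p"
      show "multiplicity p n = multiplicity p m"
      proof (cases "p \<in> P")
        case True
        then show ?thesis using fun_cong[OF nm(3), of p] unfolding g_def by simp
      next
        case False
        then show ?thesis using notP0[OF nm(1) False pp] notP0[OF nm(2) False pp] by simp
      qed
    qed
  qed
  have img: "g ` {1..N} \<subseteq> PiE P (\<lambda>_. {..N})"
  proof
    fix f assume "f \<in> g ` {1..N}"
    then obtain n where n: "n \<in> {1..N}" "f = g n" by auto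
    have "multiplicity p n \<le> N" if "p \<in> P" for p
    proof -
      have "p ^ multiplicity p n dvd n" by (rule multiplicity_dvd)
      then have "p ^ multiplicity p n \<le> n" using n by (intro dvd_imp_le) auto
      moreover have "2 ^ multiplicity p n \<le> p ^ multiplicity p n" using P2[OF that] by (intro power_mono) auto
      moreover have "multiplicity p n < 2 ^ multiplicity p n" by (rule less_exp)
      moreover have "n \<le> N" using n(1) by simp
      ultimately show ?thesis by linarith
    qed
    then show "f \<in> PiE P (\<lambda>_. {..N})" unfolding n g_def by auto
  qed
  have val: "(\<Prod>p\<in>P. (1/real p)^(g n p)) = 1 / real n" if n: "n \<in> {1..N}" for n
  proof -
    have sub: "prime_factors n \<subseteq> P"
    proof
      fix p assume "p \<in> prime_factors n"
      then have "prime p" "p dvd n" by (auto simp: in_prime_factors_iff)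
      then show "p \<in> P" using n unfolding P_def by (auto dest: dvd_imp_le)
    qed
    have "n = (\<Prod>p \<in> prime_factors n. p ^ multiplicity p n)"
      using n by (intro prime_factorization_nat) auto
    also have "\<dots> = (\<Prod>p \<in> P. p ^ multiplicity p n)"
    proof (rule prod.mono_neutral_left[OF finP sub])
      show "\<forall>i\<in>P - prime_factors n. i ^ multiplicity i n = 1"
      proof
        fix i assume "i \<in> P - prime_factors n"
        then have "\<not> i dvd n" using n unfolding P_def by (auto simp: in_prime_factors_iff)
        then show "i ^ multiplicity i n = 1" by (simp add: not_dvd_imp_multiplicity_0)
      qed
    qed
    finally have eq: "real n = (\<Prod>p \<in> P. real p ^ g n p)" unfolding g_def
      by (metis (no_types, lifting) of_nat_power of_nat_prod prod.cong restrict_apply)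
    have "(\<Prod>p\<in>P. (1/real p)^(g n p)) = (\<Prod>p\<in>P. 1 / real p ^ g n p)"
      by (simp add: power_one_over)
    also have "\<dots> = 1 / (\<Prod>p\<in>P. real p ^ g n p)" by (simp add: prod_dividef)
    finally show ?thesis using eq by simp
  qed
  have "ln (real N + 1) \<le> harm N" by (rule ln_le_harm)
  also have "harm N = (\<Sum>n\<in>{1..N}. (\<Prod>p\<in>P. (1/real p)^(g n p)))"
    unfolding harm_def using val by (simp add: inverse_eq_divide)
  also have "\<dots> = (\<Sum>f\<in>g ` {1..N}. (\<Prod>p\<in>P. (1/real p)^(f p)))"
    by (rule sum.reindex[OF inj, symmetric, unfolded comp_def])
  also have "\<dots> \<le> (\<Sum>f\<in>PiE P (\<lambda>_. {..N}). (\<Prod>p\<in>P. (1/real p)^(f p)))"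
    by (rule sum_mono2) (use img finP in \<open>auto intro!: finite_PiE prod_nonneg\<close>)
  also have "\<dots> = (\<Prod>p\<in>P. \<Sum>k\<in>{..N}. (1/real p)^k)"
    by (rule prod_sum_PiE[symmetric]) (use finP in auto)
  also have "\<dots> \<le> (\<Prod>p\<in>P. real p / (real p - 1))"
    by (rule prod_mono) (use geo in \<open>auto intro!: sum_nonneg\<close>)
  finally show ?thesis unfolding P_def .
qed

theorem lemma7:
  fixes \<alpha> :: real
  assumes "0 < \<alpha>" and "\<alpha> < 1/2"
  shows "\<exists>c>0. \<forall>M::real. M \<ge> 2 \<longrightarrow>
    (\<Prod>p\<in>{p::nat. prime p \<and> real p \<le> M}.
        real p powr (2*\<alpha> - 2) * (1 - 1 / real p) powr (2*\<alpha>)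
        + 2 / real p * (1 - 1 / real p)
        + (1 - 1 / real p) powr (2 - 2*\<alpha>))
      \<ge> c * (ln M) powr (2*\<alpha>)"
proof (intro exI[of _ "1/8"] conjI allI impI)
  show "(1/8::real) > 0" by simp
  fix M :: real assume M: "M \<ge> 2"
  define N where "N = nat \<lfloor>M\<rfloor>"
  have SN: "{p::nat. prime p \<and> real p \<le> M} = {p. prime p \<and> p \<le> N}"
  proof -
    have f0: "\<lfloor>M\<rfloor> \<ge> 0" using M by simp
    have "(p \<le> N) = (real p \<le> M)" for p
      unfolding N_def using f0 by (simp add: le_nat_iff le_floor_iff)
    then show ?thesis by auto
  qed
  define S where "S = {p::nat. prime p \<and> p \<le> N}"
  have finS: "finite S" unfolding S_def by (rule finite_subset[of _ "{..N}"]) auto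
  have S2: "\<And>p. p \<in> S \<Longrightarrow> real p \<ge> 2" unfolding S_def using prime_ge_2_nat by force
  have SsubN: "S \<subseteq> {2..N}" unfolding S_def using prime_ge_2_nat by auto
  have MN: "M \<le> real N + 1" unfolding N_def using M by linarith
  have lnM: "0 \<le> ln M" "ln M \<le> ln (real N + 1)" using M MN by auto
  have pos1: "\<And>p. p \<in> S \<Longrightarrow> 0 \<le> 1 - 1 / (real p)^2"
  proof -
    fix p assume "p \<in> S"
    then have "1 \<le> (real p)^2" using S2 by (intro one_le_power) force
    then show "0 \<le> 1 - 1 / (real p)^2" using divide_le_eq_1[of 1 "(real p)^2"] by auto
  qed
  have pos2: "\<And>p. p \<in> S \<Longrightarrow> 0 \<le> real p / (real p - 1)"
  proof -
    fix p assume "p \<in> S"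
    then have "real p \<ge> 2" using S2 by blast
    then show "0 \<le> real p / (real p - 1)" by simp
  qed
  let ?F = "\<lambda>p::nat. real p powr (2*\<alpha> - 2) * (1 - 1 / real p) powr (2*\<alpha>)
        + 2 / real p * (1 - 1 / real p)
        + (1 - 1 / real p) powr (2 - 2*\<alpha>)"
  have a1: "(\<Prod>p\<in>S. (real p / (real p - 1)) powr (2*\<alpha>) * (1 - 1/(real p)^2)^3) \<le> (\<Prod>p\<in>S. ?F p)"
  proof (rule prod_mono)
    fix p assume pS: "p \<in> S"
    have "0 \<le> (1 - 1/(real p)^2)^3" using pos1[OF pS] by simp
    then show "0 \<le> (real p / (real p - 1)) powr (2*\<alpha>) * (1 - 1/(real p)^2)^3 \<and>
      (real p / (real p - 1)) powr (2*\<alpha>) * (1 - 1/(real p)^2)^3 \<le> ?F p"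
      using factor_bound[OF assms S2[OF pS]] by simp
  qed
  moreover have a2: "(\<Prod>p\<in>S. (real p / (real p - 1)) powr (2*\<alpha>) * (1 - 1/(real p)^2)^3)
     = (\<Prod>p\<in>S. real p / (real p - 1)) powr (2*\<alpha>) * (\<Prod>p\<in>S. 1 - 1/(real p)^2)^3"
    by (simp add: prod.distrib prod_powr_distrib pos2 prod_power_distrib)
  moreover have a3: "(ln M) powr (2*\<alpha>) \<le> (\<Prod>p\<in>S. real p / (real p - 1)) powr (2*\<alpha>)"
    using euler_prod[of N] lnM assms unfolding S_def by (intro powr_mono2) auto
  moreover have a4: "(1/2::real)^3 \<le> (\<Prod>p\<in>S. 1 - 1/(real p)^2)^3"
    using tele_sub[OF SsubN] by (intro power_mono) auto
  have "(ln M) powr (2*\<alpha>) * (1/2)^3 \<le> (\<Prod>p\<in>S. ?F p)"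
  proof -
    have "(ln M) powr (2*\<alpha>) * (1/2)^3 \<le> (\<Prod>p\<in>S. real p / (real p - 1)) powr (2*\<alpha>) * (\<Prod>p\<in>S. 1 - 1/(real p)^2)^3"
      by (rule mult_mono[OF a3 a4]) auto
    then show ?thesis using a1 a2 by linarith
  qed
  show "1/8 * (ln M) powr (2*\<alpha>) \<le> (\<Prod>p\<in>{p::nat. prime p \<and> real p \<le> M}. ?F p)"
  proof -
    have eq: "(ln M) powr (2*\<alpha>) * (1/2)^3 = 1/8 * (ln M) powr (2*\<alpha>)" by (simp add: power3_eq_cube)
    show ?thesis unfolding SN S_def[symmetric] using eq \<open>(ln M) powr (2*\<alpha>) * (1/2)^3 \<le> (\<Prod>p\<in>S. ?F p)\<close> by linarith
  qed
qed

end
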